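(* Let $X$ be a compact metric space, $r:X\to X$ a finite-to-one, onto, Borel measurable map, $\mu$ a strongly invariant Borel probability measure on $X$ such that $r$ is ergodic with respect to $\mu$, and $m_0$ a quadrature mirror filter on $X$ such that $|m_0|$ is not $\mu$-a.e. equal to $1$, $\mu(\{m_0=0\})=0$ and $\log|m_0|^2\in L^1(\mu)$. Then for $\mu_\infty$-almost every $z\in X_\infty$, $U_z$ is a unitary operator on $\mathcal H_z$, $\pi_z$ is a representation of the bounded Borel functions on $X$ on $\mathcal H_z$ satisfying $U_z\pi_z(f)U_z^{-1}=\pi_z(f\circ r)$, and the representation $[\mathcal H_z,U_z,\pi_z]$ is irreducible.
   Context: Strong invariance: $\int f\,d\mu=\int\frac{1}{\#r^{-1}(x)}\sum_{r(y)=x}f(y)\,d\mu(x)$ for bounded Borel $f$. QMF: Borel $m_0$ with $\frac{1}{\#r^{-1}(x)}\sum_{r(y)=x}|m_0(y)|^2=1$ for all $x$. $W(x)=|m_0(x)|^2/\#r^{-1}(r(x))$. Solenoid $X_\infty=\{(x_0,x_1,\dots)\in X^{\mathbb N}:r(x_{n+1})=x_n\}$, $r_\infty(x_0,x_1,\dots)=(r(x_0),x_0,x_1,\dots)$ (automorphism, inverse is the left shift), $\theta_0(x_0,\dots)=x_0$. $\mu_\infty$ is the measure on $X_\infty$ given by $\int f\,d\mu_\infty=\int_X\int_{\Omega_x}f\,dP_x\,d\mu(x)$, where $\Omega_x=\{(x_n)\in X_\infty:x_0=x\}$ and $P_x(x_1=z_1,\dots,x_n=z_n)=W(z_1)\cdots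 W(z_n)$. $\tilde m_0=1$, $\tilde m_n=\prod_{k=0}^{n-1}m_0\circ\theta_0\circ r_\infty^k$ ($n\ge1$), $\tilde m_n=1/\prod_{k=n}^{-1}m_0\circ\theta_0\circ r_\infty^k$ ($n<0$). For $z$ with all $\tilde m_n(z)\ne0$: $\mathcal H_z=\{(\xi_n)_{n\in\mathbb Z}:\sum|\xi_n|^2|\tilde m_n(z)|^2<\infty\}$ with inner product $\sum\xi_n\overline{\eta_n}|\tilde m_n(z)|^2$; $U_z(\xi_n)_n=(m_0(\theta_0(r_\infty^nz))\xi_{n+1})_n$; $\pi_z(f)(\xi_n)_n=(f(\theta_0(r_\infty^nz))\xi_n)_n$. Irreducible means the only operators commuting with $U_z$ and all $\pi_z(f)$ are scalar multiples of the identity. *)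

theory Defs
  imports "HOL-Probability.Probability"
begin

definition npre :: "('a \<Rightarrow> 'a) \<Rightarrow> 'a \<Rightarrow> real" where
  "npre r x = real (card (r -` {x}))"

definition strongly_invariant :: "('a::topological_space) measure \<Rightarrow> ('a \<Rightarrow> 'a) \<Rightarrow> bool" where
  "strongly_invariant \<mu> r \<longleftrightarrow>
     (\<forall>f::'a \<Rightarrow> real. f \<in> borel_measurable borel \<longrightarrow> bounded (range f) \<longrightarrow>
        integral\<^sup>L \<mu> f = integral\<^sup>L \<mu> (\<lambda>x. (1 / npre r x) * (\<Sum>y\<in>r -` {x}. f y)))"

definition ergodic_map :: "'a measure \<Rightarrow> ('a \<Rightarrow> 'a) \<Rightarrow> bool" where
  "ergodic_map \<mu> r \<longleftrightarrow>
     (\<forall>A\<in>sets \<mu>. r -` A = A \<longrightarrow> emeasure \<mu> A = 0 \<or> emeasure \<mu> A = 1)"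

definition QMF :: "('a \<Rightarrow> 'a) \<Rightarrow> ('a::topological_space \<Rightarrow> complex) \<Rightarrow> bool" where
  "QMF r m0 \<longleftrightarrow> m0 \<in> borel_measurable borel \<and>
     (\<forall>x. (1 / npre r x) * (\<Sum>y\<in>r -` {x}. (cmod (m0 y))\<^sup>2) = 1)"

definition Wf :: "('a \<Rightarrow> 'a) \<Rightarrow> ('a \<Rightarrow> complex) \<Rightarrow> 'a \<Rightarrow> real" where
  "Wf r m0 x = (cmod (m0 x))\<^sup>2 / npre r (r x)"

definition solenoid :: "('a \<Rightarrow> 'a) \<Rightarrow> (nat \<Rightarrow> 'a) set" where
  "solenoid r = {z. \<forall>n. r (z (Suc n)) = z n}"

definition rinf :: "('a \<Rightarrow> 'a) \<Rightarrow> (nat \<Rightarrow> 'a) \<Rightarrow> (nat \<Rightarrow> 'a)" where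
  "rinf r z = (\<lambda>n. case n of 0 \<Rightarrow> r (z 0) | Suc k \<Rightarrow> z k)"

definition lshift :: "(nat \<Rightarrow> 'a) \<Rightarrow> (nat \<Rightarrow> 'a)" where
  "lshift z = (\<lambda>n. z (Suc n))"

definition rinf_pow :: "('a \<Rightarrow> 'a) \<Rightarrow> int \<Rightarrow> (nat \<Rightarrow> 'a) \<Rightarrow> (nat \<Rightarrow> 'a)" where
  "rinf_pow r n z = (if 0 \<le> n then (rinf r ^^ nat n) z else (lshift ^^ nat (- n)) z)"

definition theta0 :: "(nat \<Rightarrow> 'a) \<Rightarrow> 'a" where
  "theta0 z = z 0"

text \<open>Finite paths x = y_0, y_1, ..., y_n with r(y_{k+1}) = y_k (tail normalised to x).\<close>
definition paths :: "('a \<Rightarrow> 'a) \<Rightarrow> 'a \<Rightarrow> nat \<Rightarrow> (nat \<Rightarrow> 'a) set" where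
  "paths r x n = {y. y 0 = x \<and> (\<forall>k<n. r (y (Suc k)) = y k) \<and> (\<forall>k>n. y k = x)}"

text \<open>mu_infinity, characterised by its values on cylinder sets
  (these form a generating pi-system, so this determines the measure uniquely).\<close>
definition is_mu_inf :: "('a::topological_space) measure \<Rightarrow> ('a \<Rightarrow> 'a) \<Rightarrow> ('a \<Rightarrow> complex)
     \<Rightarrow> (nat \<Rightarrow> 'a) measure \<Rightarrow> bool" where
  "is_mu_inf \<mu> r m0 M \<longleftrightarrow>
     sets M = sets (PiM UNIV (\<lambda>_::nat. (borel :: 'a measure))) \<and>
     (\<forall>n (A::nat \<Rightarrow> 'a set). (\<forall>k\<le>n. A k \<in> sets borel) \<longrightarrow>
        emeasure M {z\<in>space M. \<forall>k\<le>n. z k \<in> A k} =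
        (\<integral>\<^sup>+ x. ennreal (\<Sum>y\<in>paths r x n.
              (\<Prod>k\<in>{1..n}. Wf r m0 (y k)) * (\<Prod>k\<in>{0..n}. indicator (A k) (y k))) \<partial>\<mu>))"

definition mt :: "('a \<Rightarrow> 'a) \<Rightarrow> ('a \<Rightarrow> complex) \<Rightarrow> int \<Rightarrow> (nat \<Rightarrow> 'a) \<Rightarrow> complex" where
  "mt r m0 n z =
     (if n = 0 then 1
      else if 0 < n then (\<Prod>k\<in>{0..<n}. m0 (theta0 (rinf_pow r k z)))
      else 1 / (\<Prod>k\<in>{n..<0}. m0 (theta0 (rinf_pow r k z))))"

definition Hz :: "('a \<Rightarrow> 'a) \<Rightarrow> ('a \<Rightarrow> complex) \<Rightarrow> (nat \<Rightarrow> 'a) \<Rightarrow> (int \<Rightarrow> complex) set" where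
  "Hz r m0 z = {\<xi>. (\<lambda>n. (cmod (\<xi> n))\<^sup>2 * (cmod (mt r m0 n z))\<^sup>2) summable_on UNIV}"

definition Hip :: "('a \<Rightarrow> 'a) \<Rightarrow> ('a \<Rightarrow> complex) \<Rightarrow> (nat \<Rightarrow> 'a) \<Rightarrow> (int \<Rightarrow> complex) \<Rightarrow> (int \<Rightarrow> complex) \<Rightarrow> complex" where
  "Hip r m0 z \<xi> \<eta> = (\<Sum>\<^sub>\<infinity>n. \<xi> n * cnj (\<eta> n) * complex_of_real ((cmod (mt r m0 n z))\<^sup>2))"

definition Hnorm :: "('a \<Rightarrow> 'a) \<Rightarrow> ('a \<Rightarrow> complex) \<Rightarrow> (nat \<Rightarrow> 'a) \<Rightarrow> (int \<Rightarrow> complex) \<Rightarrow> real" where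
  "Hnorm r m0 z \<xi> = sqrt (\<Sum>\<^sub>\<infinity>n. (cmod (\<xi> n))\<^sup>2 * (cmod (mt r m0 n z))\<^sup>2)"

definition Uz :: "('a \<Rightarrow> 'a) \<Rightarrow> ('a \<Rightarrow> complex) \<Rightarrow> (nat \<Rightarrow> 'a) \<Rightarrow> (int \<Rightarrow> complex) \<Rightarrow> (int \<Rightarrow> complex)" where
  "Uz r m0 z \<xi> = (\<lambda>n. m0 (theta0 (rinf_pow r n z)) * \<xi> (n + 1))"

definition piz :: "('a \<Rightarrow> 'a) \<Rightarrow> (nat \<Rightarrow> 'a) \<Rightarrow> ('a \<Rightarrow> complex) \<Rightarrow> (int \<Rightarrow> complex) \<Rightarrow> (int \<Rightarrow> complex)" where
  "piz r z f \<xi> = (\<lambda>n. f (theta0 (rinf_pow r n z)) * \<xi> n)"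

definition bounded_borel :: "('a::topological_space \<Rightarrow> complex) \<Rightarrow> bool" where
  "bounded_borel f \<longleftrightarrow> f \<in> borel_measurable borel \<and> bounded (range f)"

definition bounded_op_on :: "(int \<Rightarrow> complex) set \<Rightarrow> ((int \<Rightarrow> complex) \<Rightarrow> real)
      \<Rightarrow> ((int \<Rightarrow> complex) \<Rightarrow> (int \<Rightarrow> complex)) \<Rightarrow> bool" where
  "bounded_op_on H nrm T \<longleftrightarrow>
     (\<forall>\<xi>\<in>H. T \<xi> \<in> H) \<and>
     (\<forall>\<xi>\<in>H. \<forall>\<eta>\<in>H. \<forall>c::complex. T (\<lambda>n. c * \<xi> n + \<eta> n) = (\<lambda>n. c * T \<xi> n + T \<eta> n)) \<and>
     (\<exists>C. \<forall>\<xi>\<in>H. nrm (T \<xi>) \<le> C * nrm \<xi>)"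

definition unitary_on_Hz :: "('a \<Rightarrow> 'a) \<Rightarrow> ('a \<Rightarrow> complex) \<Rightarrow> (nat \<Rightarrow> 'a) \<Rightarrow> bool" where
  "unitary_on_Hz r m0 z \<longleftrightarrow>
     bounded_op_on (Hz r m0 z) (Hnorm r m0 z) (Uz r m0 z) \<and>
     bij_betw (Uz r m0 z) (Hz r m0 z) (Hz r m0 z) \<and>
     (\<forall>\<xi>\<in>Hz r m0 z. \<forall>\<eta>\<in>Hz r m0 z. Hip r m0 z (Uz r m0 z \<xi>) (Uz r m0 z \<eta>) = Hip r m0 z \<xi> \<eta>)"

definition covariant_rep_Hz :: "('a::topological_space \<Rightarrow> 'a) \<Rightarrow> ('a \<Rightarrow> complex) \<Rightarrow> (nat \<Rightarrow> 'a) \<Rightarrow> bool" where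
  "covariant_rep_Hz r m0 z \<longleftrightarrow>
     (\<forall>f. bounded_borel f \<longrightarrow> bounded_op_on (Hz r m0 z) (Hnorm r m0 z) (piz r z f)) \<and>
     (\<forall>\<xi>\<in>Hz r m0 z. piz r z (\<lambda>_. 1) \<xi> = \<xi>) \<and>
     (\<forall>f g c. bounded_borel f \<longrightarrow> bounded_borel g \<longrightarrow> (\<forall>\<xi>\<in>Hz r m0 z.
        piz r z (\<lambda>x. c * f x + g x) \<xi> = (\<lambda>n. c * piz r z f \<xi> n + piz r z g \<xi> n) \<and>
        piz r z (\<lambda>x. f x * g x) \<xi> = piz r z f (piz r z g \<xi>))) \<and>
     (\<forall>f. bounded_borel f \<longrightarrow> (\<forall>\<xi>\<in>Hz r m0 z. \<forall>\<eta>\<in>Hz r m0 z.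
        Hip r m0 z (piz r z f \<xi>) \<eta> = Hip r m0 z \<xi> (piz r z (\<lambda>x. cnj (f x)) \<eta>))) \<and>
     (\<forall>f. bounded_borel f \<longrightarrow> (\<forall>\<xi>\<in>Hz r m0 z.
        Uz r m0 z (piz r z f (the_inv_into (Hz r m0 z) (Uz r m0 z) \<xi>)) = piz r z (f \<circ> r) \<xi>))"

definition irreducible_Hz :: "('a::topological_space \<Rightarrow> 'a) \<Rightarrow> ('a \<Rightarrow> complex) \<Rightarrow> (nat \<Rightarrow> 'a) \<Rightarrow> bool" where
  "irreducible_Hz r m0 z \<longleftrightarrow>
     (\<forall>T. bounded_op_on (Hz r m0 z) (Hnorm r m0 z) T \<longrightarrow>
        (\<forall>\<xi>\<in>Hz r m0 z. T (Uz r m0 z \<xi>) = Uz r m0 z (T \<xi>)) \<longrightarrow>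
        (\<forall>f. bounded_borel f \<longrightarrow> (\<forall>\<xi>\<in>Hz r m0 z. T (piz r z f \<xi>) = piz r z f (T \<xi>))) \<longrightarrow>
        (\<exists>c::complex. \<forall>\<xi>\<in>Hz r m0 z. T \<xi> = (\<lambda>n. c * \<xi> n)))"

end

theory Submission
  imports Defs
begin

lemma disjoint_cover:
  assumes cpt: "compact (UNIV :: 'a::metric_space set)"
  shows "\<exists>I :: ('a set \<times> 'a set) set. countable I \<and>
    (\<forall>p\<in>I. open (fst p) \<and> open (snd p) \<and> fst p \<inter> snd p = {}) \<and>
    (\<forall>a b. a \<noteq> b \<longrightarrow> (\<exists>p\<in>I. a \<in> fst p \<and> b \<in> snd p))"
proof -
  have "\<forall>k::nat. \<exists>C::'a set. finite C \<and> UNIV \<subseteq> (\<Union>c\<in>C. ball c (1 / Suc k))"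
  proof
    fix k :: nat
    have cov: "UNIV \<subseteq> (\<Union>c\<in>UNIV. ball (c::'a) (1 / Suc k))"
      apply (simp add: subset_eq)
      apply (intro allI)
      apply (rule_tac x=x in exI)
      apply simp
      done
    obtain C :: "'a set" where "C \<subseteq> UNIV" "finite C" "UNIV \<subseteq> (\<Union>c\<in>C. ball c (1 / Suc k))"
      using compactE_image[OF cpt, of UNIV "\<lambda>c. ball c (1 / Suc k)", OF open_ball cov] .
    then show "\<exists>C::'a set. finite C \<and> UNIV \<subseteq> (\<Union>c\<in>C. ball c (1 / Suc k))" by (intro exI[of _ C] conjI)
  qed
  then have "\<exists>C::nat \<Rightarrow> 'a set. \<forall>k. finite (C k) \<and> UNIV \<subseteq> (\<Union>c\<in>C k. ball c (1 / Suc k))"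
    by (rule choice)
  then obtain C :: "nat \<Rightarrow> 'a set" where C0: "\<forall>k. finite (C k) \<and> UNIV \<subseteq> (\<Union>c\<in>C k. ball c (1 / Suc k))"
    by (elim exE)
  have C1: "\<And>k. finite (C k)" using C0 by simp
  have C2: "\<And>k. UNIV \<subseteq> (\<Union>c\<in>C k. ball c (1 / Suc k))" using C0 by simp
  define S where "S = {(k,c,d). c \<in> C k \<and> d \<in> C k \<and> ball c (1 / Suc k) \<inter> ball d (1 / Suc k) = {}}"
  define I where "I = (\<lambda>(k,c,d). (ball c (1 / Suc k), ball d (1 / Suc k))) ` S"
  have "countable I"
  proof -
    have "S \<subseteq> Sigma UNIV (\<lambda>k. C k \<times> C k)" unfolding S_def by auto
    moreover have "countable (Sigma (UNIV::nat set) (\<lambda>k. C k \<times> C k))"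
      using C1 by (intro countable_SIGMA) (auto intro: countable_finite)
    ultimately have "countable S" by (rule countable_subset)
    then show ?thesis unfolding I_def by (rule countable_image)
  qed
  moreover have "\<forall>p\<in>I. open (fst p) \<and> open (snd p) \<and> fst p \<inter> snd p = {}"
    unfolding I_def S_def by auto
  moreover have "\<exists>p\<in>I. a \<in> fst p \<and> b \<in> snd p" if "a \<noteq> b" for a b
  proof -
    have "dist a b / 4 > 0" using that by simp
    then obtain k :: nat where k: "1 / Suc k < dist a b / 4"
      by (rule nat_approx_posE)
    have "a \<in> (\<Union>c\<in>C k. ball c (1 / Suc k))" using C2[of k] by (rule subsetD) simp
    then obtain c where c: "c \<in> C k" "a \<in> ball c (1 / Suc k)" by (rule UN_E)
    have "b \<in> (\<Union>c\<in>C k. ball c (1 / Suc k))" using C2[of k] by (rule subsetD) simp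
    then obtain d where d: "d \<in> C k" "b \<in> ball d (1 / Suc k)" by (rule UN_E)
    have disj: "ball c (1 / Suc k) \<inter> ball d (1 / Suc k) = {}"
    proof (rule ccontr)
      assume "ball c (1 / Suc k) \<inter> ball d (1 / Suc k) \<noteq> {}"
      then obtain w where w: "dist c w < 1 / Suc k" "dist d w < 1 / Suc k" by auto
      have "dist a b \<le> dist a c + dist c b" by (rule dist_triangle)
      moreover have "dist c b \<le> dist c w + dist w b" by (rule dist_triangle)
      moreover have "dist w b \<le> dist w d + dist d b" by (rule dist_triangle)
      moreover have "dist a c < 1 / Suc k" using c by (simp add: dist_commute)
      moreover have "dist d b < 1 / Suc k" using d by (simp add: dist_commute)
      moreover have "dist w d < 1 / Suc k" using w by (simp add: dist_commute)
      ultimately show False using k w by linarith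
    qed
    have "(k,c,d) \<in> S" unfolding S_def using c d disj by simp
    then have "(ball c (1 / Suc k), ball d (1 / Suc k)) \<in> I"
      unfolding I_def by (rule rev_image_eqI) simp
    then show ?thesis using c(2) d(2) by (intro bexI[where x="(ball c (1 / Suc k), ball d (1 / Suc k))"]) simp_all
  qed
  ultimately show ?thesis by (intro exI[where x=I] conjI allI impI) auto
qed

lemma fixset_borel:
  fixes f :: "'a::metric_space \<Rightarrow> 'a"
  assumes cpt: "compact (UNIV :: 'a set)"
    and f: "f \<in> borel_measurable (borel :: 'a measure)"
  shows "{x. f x = (x::'a)} \<in> sets borel"
proof -
  obtain I :: "('a set \<times> 'a set) set" where I1: "countable I"
    and I2: "\<forall>p\<in>I. open (fst p) \<and> open (snd p) \<and> fst p \<inter> snd p = {}"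
    and I3: "\<forall>a b. a \<noteq> b \<longrightarrow> (\<exists>p\<in>I. a \<in> fst p \<and> b \<in> snd p)"
    using disjoint_cover[OF cpt] by (elim exE conjE)
  have eq: "{x. f x \<noteq> x} = (\<Union>p\<in>I. f -` fst p \<inter> snd p)"
  proof
    show "{x. f x \<noteq> x} \<subseteq> (\<Union>p\<in>I. f -` fst p \<inter> snd p)"
    proof
      fix x assume "x \<in> {x. f x \<noteq> x}"
      then have "f x \<noteq> x" by simp
      then have "\<exists>p\<in>I. f x \<in> fst p \<and> x \<in> snd p" by (rule I3[rule_format])
      then obtain p where p: "p \<in> I" "f x \<in> fst p \<and> x \<in> snd p" by (rule bexE)
      have "x \<in> f -` fst p \<inter> snd p" using p(2) by simp
      then show "x \<in> (\<Union>p\<in>I. f -` fst p \<inter> snd p)" using p(1) by (rule UN_I[rotated])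
    qed
    show "(\<Union>p\<in>I. f -` fst p \<inter> snd p) \<subseteq> {x. f x \<noteq> x}"
    proof
      fix x assume "x \<in> (\<Union>p\<in>I. f -` fst p \<inter> snd p)"
      then obtain p where p: "p \<in> I" "x \<in> f -` fst p \<inter> snd p" by (rule UN_E)
      have "fst p \<inter> snd p = {}" using bspec[OF I2 p(1)] by simp
      then have "f x \<noteq> x" using p(2) by auto
      then show "x \<in> {x. f x \<noteq> x}" by simp
    qed
  qed
  have mp: "f -` fst p \<inter> snd p \<in> sets borel" if "p \<in> I" for p
  proof -
    have o: "open (fst p)" "open (snd p)" using bspec[OF I2 that] by simp_all
    have "f -` fst p \<in> sets borel" using f borel_open[OF o(1)] by (rule measurable_sets_borel)
    moreover have "snd p \<in> sets borel" using borel_open[OF o(2)] .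
    ultimately show ?thesis by (rule sets.Int)
  qed
  have "(\<Union>p\<in>I. f -` fst p \<inter> snd p) \<in> sets borel"
    using I1 mp by (rule sets.countable_UN'')
  then have "{x. f x \<noteq> x} \<in> sets borel" using eq by simp
  then have "space borel - {x. f x \<noteq> x} \<in> sets borel" by (rule sets.compl_sets)
  moreover have "space borel - {x. f x \<noteq> x} = {x. f x = x}" by auto
  ultimately show ?thesis by simp
qed

lemma funpow_borel:
  fixes r :: "'a::topological_space \<Rightarrow> 'a"
  assumes "r \<in> borel_measurable (borel :: 'a measure)"
  shows "(r ^^ j) \<in> borel_measurable (borel :: 'a measure)"
proof (induction j)
  case 0 show ?case by (simp add: measurable_ident)
next
  case (Suc j) show ?case unfolding funpow.simps(2) by (rule measurable_comp[OF Suc.IH assms])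
qed

lemma space_mu:
  assumes "sets \<mu> = sets (borel :: 'a::topological_space measure)"
  shows "space \<mu> = UNIV"
  using sets_eq_imp_space_eq[OF assms] by simp

lemma npre_pos:
  assumes "\<forall>x. finite (r -` {x})" "surj r"
  shows "npre r x > 0"
proof -
  obtain y where "r y = x" using assms(2) by (metis surjD)
  then have "r -` {x} \<noteq> {}" by auto
  then show ?thesis using assms(1) unfolding npre_def by (simp add: card_gt_0_iff)
qed

lemma invariance:
  fixes r :: "'a::topological_space \<Rightarrow> 'a"
  assumes fin: "\<forall>x. finite (r -` {x})" and su: "surj r"
    and rB: "r \<in> borel_measurable borel"
    and ps: "prob_space \<mu>" and sm: "sets \<mu> = sets borel"
    and si: "strongly_invariant \<mu> r"
    and A: "A \<in> sets borel"
  shows "emeasure \<mu> (r -` A) = emeasure \<mu> A"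
proof -
  interpret prob_space \<mu> by (rule ps)
  have sp: "space \<mu> = UNIV" by (rule space_mu[OF sm])
  have rA: "r -` A \<in> sets borel" using rB A by (rule measurable_sets_borel)
  have fm: "(indicator (r -` A) :: 'a \<Rightarrow> real) \<in> borel_measurable borel"
    using rA by (rule borel_measurable_indicator)
  have fb: "bounded (range (indicator (r -` A) :: 'a \<Rightarrow> real))"
    by (rule bounded_subset[of "{0,1}"]) (auto simp: indicator_def)
  have eq: "(\<lambda>x. (1 / npre r x) * (\<Sum>y\<in>r -` {x}. (indicator (r -` A) y :: real))) = indicator A"
  proof
    fix x
    have "(\<Sum>y\<in>r -` {x}. (indicator (r -` A) y :: real)) = (\<Sum>y\<in>r -` {x}. indicator A x)"
      by (rule sum.cong) (auto simp: indicator_def)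
    also have "\<dots> = npre r x * indicator A x" by (simp add: npre_def)
    finally show "(1 / npre r x) * (\<Sum>y\<in>r -` {x}. (indicator (r -` A) y :: real)) = indicator A x"
      using npre_pos[OF fin su, of x] by simp
  qed
  have "integral\<^sup>L \<mu> (indicator (r -` A) :: 'a \<Rightarrow> real) = integral\<^sup>L \<mu> (indicator A :: 'a \<Rightarrow> real)"
    using si fm fb eq unfolding strongly_invariant_def by metis
  then have "measure \<mu> (r -` A) = measure \<mu> A" by (simp add: sp)
  then show ?thesis by (simp add: emeasure_eq_measure)
qed

lemma invariance_pow:
  fixes r :: "'a::topological_space \<Rightarrow> 'a"
  assumes fin: "\<forall>x. finite (r -` {x})" and su: "surj r"
    and rB: "r \<in> borel_measurable borel"
    and ps: "prob_space \<mu>" and sm: "sets \<mu> = sets borel"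
    and si: "strongly_invariant \<mu> r"
    and A: "A \<in> sets borel"
  shows "emeasure \<mu> ((r ^^ j) -` A) = emeasure \<mu> A"
proof (induction j)
  case 0 show ?case by simp
next
  case (Suc j)
  have eq: "(r ^^ Suc j) -` A = r -` ((r ^^ j) -` A)" by (simp only: funpow_Suc_right vimage_comp)
  have mB: "(r ^^ j) -` A \<in> sets borel"
    using funpow_borel[OF rB] A by (rule measurable_sets_borel)
  have inv: "emeasure \<mu> (r -` ((r ^^ j) -` A)) = emeasure \<mu> ((r ^^ j) -` A)"
    by (rule invariance[OF fin su rB ps sm si mB])
  show ?case by (simp only: eq inv Suc.IH)
qed

lemma funpow_comm: "(f ^^ m) ((f ^^ n) x) = (f ^^ (m + n)) x"
  by (simp add: funpow_add)

lemma periodic_null: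
  fixes r :: "'a::metric_space \<Rightarrow> 'a" and m0 :: "'a \<Rightarrow> complex"
  assumes cpt: "compact (UNIV :: 'a set)"
    and fin: "\<forall>x. finite (r -` {x})" and su: "surj r"
    and rB: "r \<in> borel_measurable borel"
    and ps: "prob_space \<mu>" and sm: "sets \<mu> = sets borel"
    and si: "strongly_invariant \<mu> r"
    and erg: "ergodic_map \<mu> r"
    and qmf: "QMF r m0"
    and nae: "\<not> (AE x in \<mu>. cmod (m0 x) = 1)"
    and p: "0 < p"
  shows "emeasure \<mu> {x. (r ^^ p) x = x} = 0"
proof -
  interpret prob_space \<mu> by (rule ps)
  have sp: "space \<mu> = UNIV" by (rule space_mu[OF sm])
  define Q where "Q = {x. (r ^^ p) x = x}"
  have QB: "Q \<in> sets borel" unfolding Q_def by (rule fixset_borel[OF cpt funpow_borel[OF rB]])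
  have Qm: "Q \<in> sets \<mu>" using QB sm by simp
  have rQ: "r x \<in> Q" if "x \<in> Q" for x
  proof -
    have "(r ^^ p) (r x) = r ((r ^^ p) x)" by (rule funpow_swap1[symmetric])
    then show ?thesis using that unfolding Q_def by simp
  qed
  have powQ: "(r ^^ j) x \<in> Q" if "x \<in> Q" for x j
    using that by (induction j) (simp_all add: rQ)
  define q where "q = p - 1"
  have pq: "p = Suc q" using p unfolding q_def by simp
  have pre_in: "r ((r ^^ q) x) = x" if "x \<in> Q" for x
    using that unfolding Q_def pq by simp
  have pre_unique: "y = (r ^^ q) (r y)" if "y \<in> Q" for y
  proof -
    have "(r ^^ q) (r y) = (r ^^ p) y" unfolding pq by (simp del: funpow.simps add: funpow_Suc_right)
    then show ?thesis using that unfolding Q_def by simp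
  qed
  have preQ: "(\<Sum>y\<in>r -` {x}. (indicator Q y :: real)) = indicator Q x" for x
  proof -
  have s: "(\<Sum>y\<in>r -` {x}. (indicator Q y :: real)) = (\<Sum>y\<in>r -` {x} \<inter> Q. 1)"
  proof -
    have fx: "finite (r -` {x})" using fin by simp
    show ?thesis unfolding sum.inter_restrict[OF fx] by (rule sum.cong) (simp_all add: indicator_def)
  qed
  show ?thesis
  proof (cases "x \<in> Q")
    case True
    have "r -` {x} \<inter> Q = {(r ^^ q) x}"
    proof
      show "r -` {x} \<inter> Q \<subseteq> {(r ^^ q) x}" using pre_unique by auto
      show "{(r ^^ q) x} \<subseteq> r -` {x} \<inter> Q" using pre_in[OF True] powQ[OF True] by auto
    qed
    then have "(\<Sum>y\<in>r -` {x}. (indicator Q y :: real)) = 1"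
      using s by simp
    then show ?thesis using True by simp
  next
    case False
    have "r -` {x} \<inter> Q = {}" using False rQ by auto
    then have "(\<Sum>y\<in>r -` {x}. (indicator Q y :: real)) = 0"
      using s by simp
    then show ?thesis using False by simp
  qed
  qed
  define h where "h = (\<lambda>x. (1 / npre r x) * (indicator Q x :: real))"
  have fm: "(indicator Q :: 'a \<Rightarrow> real) \<in> borel_measurable borel"
    using QB by (rule borel_measurable_indicator)
  have fb: "bounded (range (indicator Q :: 'a \<Rightarrow> real))"
    by (rule bounded_subset[of "{0,1}"]) (auto simp: indicator_def)
  have eqh: "(\<lambda>x. (1 / npre r x) * (\<Sum>y\<in>r -` {x}. (indicator Q y :: real))) = h"
    unfolding h_def using preQ by simp
  have mQ: "measure \<mu> Q = integral\<^sup>L \<mu> h"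
  proof -
    have "integral\<^sup>L \<mu> (indicator Q :: 'a \<Rightarrow> real) = integral\<^sup>L \<mu> h"
      using si fm fb eqh unfolding strongly_invariant_def by metis
    then show ?thesis by (simp add: sp)
  qed
  show ?thesis
  proof (cases "h \<in> borel_measurable \<mu>")
    case False
    then have "\<not> integrable \<mu> h" using borel_measurable_integrable by blast
    then have "measure \<mu> Q = 0" using mQ by (simp add: not_integrable_integral_eq)
    then show ?thesis unfolding Q_def[symmetric] by (simp add: emeasure_eq_measure)
  next
    case hm: True
    have npre1: "1 \<le> npre r x" for x
    proof -
      have "0 < card (r -` {x})" using npre_pos[OF fin su, of x] unfolding npre_def by simp
      then show ?thesis unfolding npre_def by simp
    qed
    have hb: "0 \<le> h x \<and> h x \<le> indicator Q x" for x
      using npre1[of x] unfolding h_def by (auto simp: indicator_def)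
    have hb1: "norm (h x) \<le> 1" for x
    proof -
      have h0: "0 \<le> h x" and h1: "h x \<le> indicator Q x" using hb[of x] by auto
      have "(indicator Q x :: real) \<le> 1" by (simp add: indicator_def)
      with h1 have "h x \<le> 1" by (rule order_trans)
      then show ?thesis using h0 by simp
    qed
    have ih: "integrable \<mu> h"
      by (rule integrable_const_bound[where B=1]) (rule AE_I2, rule hb1, rule hm)
    have iQb: "norm (indicator Q x :: real) \<le> 1" for x by (simp add: indicator_def)
    have iQ: "integrable \<mu> (indicator Q :: 'a \<Rightarrow> real)"
      by (rule integrable_const_bound[where B=1]) (rule AE_I2, rule iQb, rule borel_measurable_indicator, rule Qm)
    define d where "d = (\<lambda>x. indicator Q x - h x)"
    have id: "integrable \<mu> d" unfolding d_def using iQ ih by (rule Bochner_Integration.integrable_diff)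
    have "integral\<^sup>L \<mu> d = 0"
      unfolding d_def using iQ ih mQ by (simp add: sp)
    moreover have "AE x in \<mu>. 0 \<le> d x" unfolding d_def using hb by simp
    ultimately have "AE x in \<mu>. d x = 0" using integral_nonneg_eq_0_iff_AE[OF id] by simp
    then obtain N where N: "{x\<in>space \<mu>. \<not> d x = 0} \<subseteq> N" "N \<in> sets \<mu>" "emeasure \<mu> N = 0"
      by (auto elim!: AE_E)
    define B where "B = {x\<in>Q. h x \<noteq> 1}"
    have Bm: "B \<in> sets \<mu>"
    proof -
      have "{x\<in>space \<mu>. h x \<noteq> 1} \<in> sets \<mu>" using hm by measurable
      then have "Q \<inter> {x\<in>space \<mu>. h x \<noteq> 1} \<in> sets \<mu>" using Qm by blast
      moreover have "Q \<inter> {x\<in>space \<mu>. h x \<noteq> 1} = B" unfolding B_def sp by auto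
      ultimately show ?thesis by simp
    qed
    have BB: "B \<in> sets borel" using Bm sm by simp
    have B0: "emeasure \<mu> B = 0"
    proof -
      have "B \<subseteq> N" using N(1) unfolding B_def d_def sp by (auto simp: indicator_def)
      then show ?thesis using N(3) emeasure_mono[OF _ N(2)] by (metis le_zero_eq)
    qed
    have card1: "card (r -` {x}) = 1" if "x \<in> Q" "x \<notin> B" for x
    proof -
      have "1 / npre r x = 1" using that unfolding B_def h_def by simp
      then show ?thesis unfolding npre_def by simp
    qed
    define E where "E = {x\<in>Q. \<forall>j. (r ^^ j) x \<notin> B}"
    have Em: "E \<in> sets \<mu>"
    proof -
      have "\<And>j. (r ^^ j) -` (UNIV - B) \<in> sets borel"
        using funpow_borel[OF rB] BB by (auto intro!: measurable_sets_borel)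
      then have "(\<Inter>j. (r ^^ j) -` (UNIV - B)) \<in> sets borel" by auto
      then have "Q \<inter> (\<Inter>j. (r ^^ j) -` (UNIV - B)) \<in> sets borel" using QB by auto
      moreover have "Q \<inter> (\<Inter>j. (r ^^ j) -` (UNIV - B)) = E" unfolding E_def by auto
      ultimately show ?thesis using sm by simp
    qed
    have QE0: "emeasure \<mu> (Q - E) = 0"
    proof -
      have "\<And>j. (r ^^ j) -` B \<in> null_sets \<mu>"
      proof -
        fix j
        have "(r ^^ j) -` B \<in> sets borel" using funpow_borel[OF rB] BB by (rule measurable_sets_borel)
        moreover have "emeasure \<mu> ((r ^^ j) -` B) = 0"
          using invariance_pow[OF fin su rB ps sm si BB] B0 by simp
        ultimately show "(r ^^ j) -` B \<in> null_sets \<mu>" using sm by (intro null_setsI) simp_all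
      qed
      then have "(\<Union>j. (r ^^ j) -` B) \<in> null_sets \<mu>" by (rule null_sets_UN)
      moreover have "Q - E \<subseteq> (\<Union>j. (r ^^ j) -` B)" unfolding E_def by auto
      moreover have "Q - E \<in> sets \<mu>" using Qm Em by auto
      ultimately show ?thesis by (meson null_sets_subset null_setsD1)
    qed
    have rE: "r -` E = E"
    proof
      show "r -` E \<subseteq> E"
      proof
        fix y assume "y \<in> r -` E"
        then have ry: "r y \<in> E" by simp
        then have ryQ: "r y \<in> Q" and ryB: "\<And>j. (r ^^ j) (r y) \<notin> B" unfolding E_def by auto
        have c1: "card (r -` {r y}) = 1" using card1[OF ryQ ryB[of 0, simplified]] by simp
        have "(r ^^ q) (r y) \<in> r -` {r y}" using pre_in[OF ryQ] by simp
        moreover have "y \<in> r -` {r y}" by simp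
        ultimately have yeq: "y = (r ^^ q) (r y)" using c1 by (metis card_1_singletonE singletonD)
        have yeq': "(r ^^ q) (r y) = y" using yeq by (rule sym)
        have "(r ^^ q) (r y) \<in> Q" by (rule powQ[OF ryQ])
        then have "y \<in> Q" by (simp only: yeq')
        moreover have "(r ^^ j) y \<notin> B" for j
        proof -
          have "(r ^^ j) ((r ^^ q) (r y)) = (r ^^ (j + q)) (r y)" by (rule funpow_comm)
          then have "(r ^^ j) y = (r ^^ (j + q)) (r y)" by (simp only: yeq')
          then show ?thesis using ryB[of "j + q"] by simp
        qed
        ultimately show "y \<in> E" unfolding E_def by simp
      qed
      show "E \<subseteq> r -` E"
      proof
        fix x assume "x \<in> E"
        then have xQ: "x \<in> Q" and xB: "\<And>j. (r ^^ j) x \<notin> B" unfolding E_def by auto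
        have "(r ^^ j) (r x) \<notin> B" for j
        proof -
          have "(r ^^ j) (r x) = (r ^^ Suc j) x" by (simp only: funpow_Suc_right comp_def)
          then show ?thesis using xB[of "Suc j"] by simp
        qed
        then have "r x \<in> Q" "\<And>j. (r ^^ j) (r x) \<notin> B" using rQ[OF xQ] by auto
        then show "x \<in> r -` E" unfolding E_def by simp
      qed
    qed
    have good: "cmod (m0 x) = 1" if "x \<in> E" for x
    proof -
      have xE: "r x \<in> E" using that rE by auto
      then have "r x \<in> Q" "r x \<notin> B" unfolding E_def by (auto dest: spec[of _ 0])
      then have c1: "card (r -` {r x}) = 1" by (rule card1)
      have "x \<in> r -` {r x}" by simp
      then have pre: "r -` {r x} = {x}" using c1 by (metis card_1_singletonE singletonD)
      have "(1 / npre r (r x)) * (\<Sum>y\<in>r -` {r x}. (cmod (m0 y))\<^sup>2) = 1"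
        using qmf unfolding QMF_def by blast
      then have "(cmod (m0 x))\<^sup>2 = 1" using pre c1 unfolding npre_def by simp
      then show ?thesis using norm_ge_zero[of "m0 x"] by (simp add: power2_eq_1_iff)
    qed
    have E0: "emeasure \<mu> E = 0"
    proof (rule ccontr)
      assume "emeasure \<mu> E \<noteq> 0"
      then have E1: "emeasure \<mu> E = 1" using erg Em rE unfolding ergodic_map_def by blast
      have "emeasure \<mu> (space \<mu> - E) = 0"
        using E1 Em by (simp add: emeasure_compl emeasure_space_1)
      then have "AE x in \<mu>. x \<in> E" using Em by (subst AE_iff_measurable[of "space \<mu> - E"]) auto
      then have "AE x in \<mu>. cmod (m0 x) = 1" by (rule eventually_mono) (rule good)
      then show False using nae by simp
    qed
    have "emeasure \<mu> Q \<le> emeasure \<mu> (Q - E) + emeasure \<mu> E"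
    proof -
      have "Q = (Q - E) \<union> E" unfolding E_def by auto
      then have "emeasure \<mu> Q = emeasure \<mu> ((Q - E) \<union> E)" by simp
      also have "\<dots> \<le> emeasure \<mu> (Q - E) + emeasure \<mu> E"
        using Qm Em by (intro emeasure_subadditive) auto
      finally show ?thesis .
    qed
    then show ?thesis using QE0 E0 unfolding Q_def by simp
  qed
qed

lemma spaceM:
  assumes "is_mu_inf \<mu> r m0 M"
  shows "space M = UNIV"
proof -
  have "sets M = sets (PiM UNIV (\<lambda>_::nat. (borel :: 'a::topological_space measure)))"
    using assms unfolding is_mu_inf_def by (rule conjunct1)
  then have "space M = space (PiM UNIV (\<lambda>_::nat. (borel :: 'a measure)))"
    by (rule sets_eq_imp_space_eq)
  then show ?thesis by (simp add: space_PiM)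
qed

lemma comp_meas:
  assumes "is_mu_inf \<mu> r m0 M"
  shows "(\<lambda>z. z k) \<in> measurable M (borel :: 'a::topological_space measure)"
proof -
  have s: "sets M = sets (PiM UNIV (\<lambda>_::nat. (borel :: 'a measure)))"
    using assms unfolding is_mu_inf_def by (rule conjunct1)
  have "(\<lambda>z. z k) \<in> measurable (PiM UNIV (\<lambda>_::nat. (borel :: 'a measure))) borel"
    by (rule measurable_component_singleton) simp
  moreover have e: "measurable M (borel::'a measure) = measurable (PiM UNIV (\<lambda>_::nat. (borel :: 'a measure))) borel"
    by (rule measurable_cong_sets[OF s]) simp
  ultimately show ?thesis by simp
qed

lemma cyl_sets:
  assumes isM: "is_mu_inf \<mu> r m0 M"
    and A: "\<And>k. k \<le> n \<Longrightarrow> A k \<in> sets (borel :: 'a::topological_space measure)"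
  shows "{z\<in>space M. \<forall>k\<le>n. z k \<in> A k} \<in> sets M"
proof -
  have e: "{z\<in>space M. \<forall>k\<le>n. z k \<in> A k} = {z\<in>space M. \<forall>k\<in>{..n}. z k \<in> A k}"
    by (simp add: Ball_def)
  have one: "{z\<in>space M. z k \<in> A k} \<in> sets M" if "k \<in> {..n}" for k
  proof -
    have "(\<lambda>z. z k) -` A k \<inter> space M \<in> sets M"
      using comp_meas[OF isM, of k] A[of k] that by (intro measurable_sets) simp_all
    moreover have "(\<lambda>z. z k) -` A k \<inter> space M = {z\<in>space M. z k \<in> A k}" by (rule set_eqI) (simp add: conj_commute)
    ultimately show ?thesis by (simp only:)
  qed
  have "{z\<in>space M. \<forall>k\<in>{..n}. z k \<in> A k} \<in> sets M"
    by (rule sets.sets_Collect_finite_All[OF one]) simp_all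
  then show ?thesis by (simp only: e)
qed

lemma cyl_eq:
  assumes isM: "is_mu_inf \<mu> r m0 M"
    and A: "\<And>k. k \<le> n \<Longrightarrow> A k \<in> sets (borel :: 'a::topological_space measure)"
  shows "emeasure M {z\<in>space M. \<forall>k\<le>n. z k \<in> A k} =
        (\<integral>\<^sup>+ x. ennreal (\<Sum>y\<in>paths r x n.
              (\<Prod>k\<in>{1..n}. Wf r m0 (y k)) * (\<Prod>k\<in>{0..n}. indicator (A k) (y k))) \<partial>\<mu>)"
proof -
  have c: "\<forall>n (A::nat \<Rightarrow> 'a set). (\<forall>k\<le>n. A k \<in> sets borel) \<longrightarrow>
        emeasure M {z\<in>space M. \<forall>k\<le>n. z k \<in> A k} =
        (\<integral>\<^sup>+ x. ennreal (\<Sum>y\<in>paths r x n.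
              (\<Prod>k\<in>{1..n}. Wf r m0 (y k)) * (\<Prod>k\<in>{0..n}. indicator (A k) (y k))) \<partial>\<mu>)"
    using isM unfolding is_mu_inf_def by (rule conjunct2)
  have "\<forall>k\<le>n. A k \<in> sets borel" using A by simp
  then show ?thesis using c[rule_format, of n A] by simp
qed

lemma cyl_null:
  assumes isM: "is_mu_inf \<mu> r m0 M"
    and A: "\<And>k. k \<le> n \<Longrightarrow> A k \<in> sets (borel :: 'a::topological_space measure)"
    and z: "\<And>x y. y \<in> paths r x n \<Longrightarrow>
       (\<Prod>k\<in>{1..n}. Wf r m0 (y k)) * (\<Prod>k\<in>{0..n}. indicator (A k) (y k)) = 0"
  shows "{z\<in>space M. \<forall>k\<le>n. z k \<in> A k} \<in> null_sets M"
proof -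
  have "emeasure M {z\<in>space M. \<forall>k\<le>n. z k \<in> A k} =
        (\<integral>\<^sup>+ x. ennreal (\<Sum>y\<in>paths r x n.
              (\<Prod>k\<in>{1..n}. Wf r m0 (y k)) * (\<Prod>k\<in>{0..n}. indicator (A k) (y k))) \<partial>\<mu>)"
    by (rule cyl_eq[OF isM A])
  also have "\<dots> = (\<integral>\<^sup>+ x. ennreal 0 \<partial>\<mu>)"
  proof (rule nn_integral_cong)
    fix x
    have "(\<Sum>y\<in>paths r x n.
              (\<Prod>k\<in>{1..n}. Wf r m0 (y k)) * (\<Prod>k\<in>{0..n}. indicator (A k) (y k))) = 0"
      by (intro sum.neutral ballI z)
    then show "ennreal (\<Sum>y\<in>paths r x n.
              (\<Prod>k\<in>{1..n}. Wf r m0 (y k)) * (\<Prod>k\<in>{0..n}. indicator (A k) (y k))) = ennreal 0"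
      by (simp only:)
  qed
  also have "\<dots> = 0" by simp
  finally show ?thesis using cyl_sets[OF isM A] by (intro null_setsI)
qed

lemma paths0: "paths r x 0 = {\<lambda>_. x}"
proof (rule set_eqI)
  fix y :: "nat \<Rightarrow> 'a"
  have "y \<in> paths r x 0 \<longleftrightarrow> (\<forall>k. y k = x)"
  proof
    assume "y \<in> paths r x 0"
    then have a: "y 0 = x" "\<forall>k>0. y k = x" unfolding paths_def by auto
    show "\<forall>k. y k = x"
    proof
      fix k show "y k = x" using a by (cases "k = 0") auto
    qed
  qed (simp add: paths_def)
  also have "\<dots> \<longleftrightarrow> y = (\<lambda>_. x)" by (auto simp: fun_eq_iff)
  finally show "y \<in> paths r x 0 \<longleftrightarrow> y \<in> {\<lambda>_. x}" by simp
qed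

lemma cyl_0:
  assumes isM: "is_mu_inf \<mu> r m0 M" and sm: "sets \<mu> = sets borel"
    and A: "A \<in> sets (borel :: 'a::topological_space measure)"
  shows "emeasure M {z\<in>space M. \<forall>k\<le>(0::nat). z k \<in> A} = emeasure \<mu> A"
proof -
  have "emeasure M {z\<in>space M. \<forall>k\<le>(0::nat). z k \<in> (\<lambda>_. A) k} =
        (\<integral>\<^sup>+ x. ennreal (\<Sum>y\<in>paths r x 0.
              (\<Prod>k\<in>{1..0}. Wf r m0 (y k)) * (\<Prod>k\<in>{0..0}. indicator ((\<lambda>_. A) k) (y k))) \<partial>\<mu>)"
    by (rule cyl_eq[OF isM]) (simp add: A)
  also have "\<dots> = (\<integral>\<^sup>+ x. indicator A x \<partial>\<mu>)"
    by (simp add: paths0 ennreal_indicator)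
  also have "\<dots> = emeasure \<mu> A" using A sm by (intro nn_integral_indicator) simp
  finally show ?thesis .
qed

lemma cyl_0_null:
  assumes isM: "is_mu_inf \<mu> r m0 M" and sm: "sets \<mu> = sets borel"
    and A: "A \<in> sets (borel :: 'a::topological_space measure)"
    and A0: "emeasure \<mu> A = 0"
  shows "{z\<in>space M. \<forall>k\<le>(0::nat). z k \<in> A} \<in> null_sets M"
proof -
  have s: "{z\<in>space M. \<forall>k\<le>(0::nat). z k \<in> A} \<in> sets M" by (rule cyl_sets[OF isM]) (rule A)
  have "emeasure M {z\<in>space M. \<forall>k\<le>(0::nat). z k \<in> A} = 0" using cyl_0[OF isM sm A] A0 by (rule trans)
  then show ?thesis using s by (rule null_setsI)
qed

lemma AE_good:
  fixes r :: "'a::metric_space \<Rightarrow> 'a" and m0 :: "'a \<Rightarrow> complex"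
    and M :: "(nat \<Rightarrow> 'a) measure"
  assumes cpt: "compact (UNIV :: 'a set)"
    and fin: "\<forall>x. finite (r -` {x})" and su: "surj r"
    and rB: "r \<in> borel_measurable borel"
    and ps: "prob_space \<mu>" and sm: "sets \<mu> = sets borel"
    and si: "strongly_invariant \<mu> r"
    and erg: "ergodic_map \<mu> r"
    and qmf: "QMF r m0"
    and nae: "\<not> (AE x in \<mu>. cmod (m0 x) = 1)"
    and z0: "emeasure \<mu> {x. m0 x = 0} = 0"
    and isM: "is_mu_inf \<mu> r m0 M"
  shows "AE z in M. (\<forall>n. r (z (Suc n)) = z n) \<and> (\<forall>j. m0 (z (Suc j)) \<noteq> 0) \<and>
     (\<forall>j. m0 ((r ^^ j) (z 0)) \<noteq> 0) \<and> (\<forall>p j. 0 < p \<longrightarrow> (r ^^ p) ((r ^^ j) (z 0)) \<noteq> (r ^^ j) (z 0))"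
proof -
  have m0B: "m0 \<in> borel_measurable borel" using qmf unfolding QMF_def by (rule conjunct1)
  define Z where "Z = {x. m0 x = 0}"
  have ZB: "Z \<in> sets borel"
  proof -
    have "m0 -` {0} \<in> sets borel" using m0B borel_closed[OF closed_singleton] by (rule measurable_sets_borel)
    moreover have "m0 -` {0} = Z" unfolding Z_def by auto
    ultimately show ?thesis by simp
  qed
  have UB: "(UNIV :: 'a set) \<in> sets borel" by simp
  have A1: "AE z in M. \<forall>n. r (z (Suc n)) = z n"
    unfolding AE_all_countable
  proof
    fix n :: nat
    obtain I :: "('a set \<times> 'a set) set" where I1: "countable I"
      and I2: "\<forall>p\<in>I. open (fst p) \<and> open (snd p) \<and> fst p \<inter> snd p = {}"
      and I3: "\<forall>a b. a \<noteq> b \<longrightarrow> (\<exists>p\<in>I. a \<in> fst p \<and> b \<in> snd p)"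
      using disjoint_cover[OF cpt] by (elim exE conjE)
    define Ap where "Ap p = (\<lambda>k. if k = n then snd p else if k = Suc n then r -` fst p else UNIV)" for p
    define Cy where "Cy p = {z\<in>space M. \<forall>k\<le>Suc n. z k \<in> Ap p k}" for p
    have null: "Cy p \<in> null_sets M" if pI: "p \<in> I" for p
      unfolding Cy_def
    proof (rule cyl_null[OF isM])
      have o: "open (fst p)" "open (snd p)" and d: "fst p \<inter> snd p = {}" using bspec[OF I2 pI] by simp_all
      have b1: "r -` fst p \<in> sets borel" using rB borel_open[OF o(1)] by (rule measurable_sets_borel)
      have b2: "snd p \<in> sets borel" using borel_open[OF o(2)] .
      fix k show "Ap p k \<in> sets borel" unfolding Ap_def using b1 b2 UB by simp
    next
      fix x y assume y: "y \<in> paths r x (Suc n)"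
      have ry: "r (y (Suc n)) = y n" using y unfolding paths_def by simp
      have d: "fst p \<inter> snd p = {}" using bspec[OF I2 pI] by simp
      have "\<exists>k\<in>{0..Suc n}. (indicator (Ap p k) (y k) :: real) = 0"
      proof (cases "y n \<in> snd p")
        case False
        then have "(indicator (Ap p n) (y n) :: real) = 0" unfolding Ap_def by simp
        then show ?thesis by (intro bexI[of _ n]) simp_all
      next
        case True
        then have "y n \<notin> fst p" using d by auto
        then have "y (Suc n) \<notin> r -` fst p" using ry by simp
        then have "(indicator (Ap p (Suc n)) (y (Suc n)) :: real) = 0" unfolding Ap_def by simp
        then show ?thesis by (intro bexI[of _ "Suc n"]) simp_all
      qed
      then have "(\<Prod>k\<in>{0..Suc n}. (indicator (Ap p k) (y k) :: real)) = 0"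
        by (intro prod_zero) simp_all
      then show "(\<Prod>k\<in>{1..Suc n}. Wf r m0 (y k)) * (\<Prod>k\<in>{0..Suc n}. indicator (Ap p k) (y k)) = 0"
        by simp
    qed
    have N: "(\<Union>p\<in>I. Cy p) \<in> null_sets M" using I1 null by (rule null_sets_UN')
    show "AE z in M. r (z (Suc n)) = z n"
    proof (rule AE_I'[OF N])
      show "{z \<in> space M. \<not> r (z (Suc n)) = z n} \<subseteq> (\<Union>p\<in>I. Cy p)"
      proof
        fix z assume z: "z \<in> {z \<in> space M. \<not> r (z (Suc n)) = z n}"
        then have "r (z (Suc n)) \<noteq> z n" by simp
        then have "\<exists>p\<in>I. r (z (Suc n)) \<in> fst p \<and> z n \<in> snd p" by (rule I3[rule_format])
        then obtain p where p: "p \<in> I" "r (z (Suc n)) \<in> fst p \<and> z n \<in> snd p" by (rule bexE)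
        have "z \<in> Cy p" unfolding Cy_def Ap_def using z p(2) by auto
        then show "z \<in> (\<Union>p\<in>I. Cy p)" using p(1) by (rule UN_I[rotated])
      qed
    qed
  qed
  have A2: "AE z in M. \<forall>j. m0 (z (Suc j)) \<noteq> 0"
    unfolding AE_all_countable
  proof
    fix j :: nat
    define A where "A = (\<lambda>k. if k = Suc j then Z else UNIV)"
    have null: "{z\<in>space M. \<forall>k\<le>Suc j. z k \<in> A k} \<in> null_sets M"
    proof (rule cyl_null[OF isM])
      fix k show "A k \<in> sets borel" unfolding A_def using ZB UB by simp
    next
      fix x y assume y: "y \<in> paths r x (Suc j)"
      show "(\<Prod>k\<in>{1..Suc j}. Wf r m0 (y k)) * (\<Prod>k\<in>{0..Suc j}. indicator (A k) (y k)) = 0"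
      proof (cases "y (Suc j) \<in> Z")
        case True
        then have "Wf r m0 (y (Suc j)) = 0" unfolding Wf_def Z_def by simp
        then have "(\<Prod>k\<in>{1..Suc j}. Wf r m0 (y k)) = 0" by (intro prod_zero) (simp_all add: bexI[of _ "Suc j"])
        then show ?thesis by simp
      next
        case False
        then have "(indicator (A (Suc j)) (y (Suc j)) :: real) = 0" unfolding A_def by simp
        then have "(\<Prod>k\<in>{0..Suc j}. (indicator (A k) (y k) :: real)) = 0"
          by (intro prod_zero) (simp_all add: bexI[of _ "Suc j"])
        then show ?thesis by simp
      qed
    qed
    show "AE z in M. m0 (z (Suc j)) \<noteq> 0"
    proof (rule AE_I'[OF null])
      show "{z \<in> space M. \<not> m0 (z (Suc j)) \<noteq> 0} \<subseteq> {z\<in>space M. \<forall>k\<le>Suc j. z k \<in> A k}"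
        unfolding A_def Z_def by auto
    qed
  qed
  have A3: "AE z in M. \<forall>j. m0 ((r ^^ j) (z 0)) \<noteq> 0"
    unfolding AE_all_countable
  proof
    fix j :: nat
    have B: "(r ^^ j) -` Z \<in> sets borel" using funpow_borel[OF rB] ZB by (rule measurable_sets_borel)
    have "emeasure \<mu> ((r ^^ j) -` Z) = 0"
      using invariance_pow[OF fin su rB ps sm si ZB] z0 unfolding Z_def by simp
    then have null: "{z\<in>space M. \<forall>k\<le>(0::nat). z k \<in> (r ^^ j) -` Z} \<in> null_sets M"
      by (rule cyl_0_null[OF isM sm B])
    show "AE z in M. m0 ((r ^^ j) (z 0)) \<noteq> 0"
    proof (rule AE_I'[OF null])
      show "{z \<in> space M. \<not> m0 ((r ^^ j) (z 0)) \<noteq> 0} \<subseteq> {z\<in>space M. \<forall>k\<le>(0::nat). z k \<in> (r ^^ j) -` Z}"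
        unfolding Z_def by auto
    qed
  qed
  have A4: "AE z in M. \<forall>p j. 0 < p \<longrightarrow> (r ^^ p) ((r ^^ j) (z 0)) \<noteq> (r ^^ j) (z 0)"
    unfolding AE_all_countable
  proof (intro allI)
    fix p j :: nat
    show "AE z in M. 0 < p \<longrightarrow> (r ^^ p) ((r ^^ j) (z 0)) \<noteq> (r ^^ j) (z 0)"
    proof (cases "0 < p")
      case False then show ?thesis by simp
    next
      case p: True
      define Q where "Q = {x. (r ^^ p) x = x}"
      have QB: "Q \<in> sets borel" unfolding Q_def by (rule fixset_borel[OF cpt funpow_borel[OF rB]])
      have B: "(r ^^ j) -` Q \<in> sets borel" using funpow_borel[OF rB] QB by (rule measurable_sets_borel)
      have "emeasure \<mu> ((r ^^ j) -` Q) = 0"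
        using invariance_pow[OF fin su rB ps sm si QB] periodic_null[OF cpt fin su rB ps sm si erg qmf nae p]
        unfolding Q_def by simp
      then have null: "{z\<in>space M. \<forall>k\<le>(0::nat). z k \<in> (r ^^ j) -` Q} \<in> null_sets M"
        by (rule cyl_0_null[OF isM sm B])
      show ?thesis
      proof (rule AE_I'[OF null])
        show "{z \<in> space M. \<not> (0 < p \<longrightarrow> (r ^^ p) ((r ^^ j) (z 0)) \<noteq> (r ^^ j) (z 0))}
          \<subseteq> {z\<in>space M. \<forall>k\<le>(0::nat). z k \<in> (r ^^ j) -` Q}"
          unfolding Q_def by auto
      qed
    qed
  qed
  show ?thesis using A1 A2 A3 A4 by (intro eventually_conj)
qed

definition xp :: "('a \<Rightarrow> 'a) \<Rightarrow> (nat \<Rightarrow> 'a) \<Rightarrow> int \<Rightarrow> 'a" where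
  "xp r z n = theta0 (rinf_pow r n z)"

lemma rinf_pow_0: "(rinf r ^^ k) z 0 = (r ^^ k) (z 0)"
proof (induction k)
  case 0 show ?case by simp
next
  case (Suc k) then show ?case by (simp add: rinf_def)
qed

lemma lshift_pow: "(lshift ^^ k) z i = z (i + k)"
proof (induction k arbitrary: i)
  case 0 show ?case by simp
next
  case (Suc k) then show ?case by (simp add: lshift_def)
qed

lemma xp_ge0: "0 \<le> n \<Longrightarrow> xp r z n = (r ^^ nat n) (z 0)"
  by (simp add: xp_def rinf_pow_def theta0_def rinf_pow_0)

lemma xp_le0: "n \<le> 0 \<Longrightarrow> xp r z n = z (nat (- n))"
proof (cases "n = 0")
  case True then show ?thesis by (simp add: xp_def rinf_pow_def theta0_def)
next
  case False
  assume "n \<le> 0"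
  with False have "n < 0" by simp
  then show ?thesis by (simp add: xp_def rinf_pow_def theta0_def lshift_pow)
qed

lemma xp_step:
  assumes sol: "\<forall>n. r (z (Suc n)) = z n"
  shows "r (xp r z n) = xp r z (n + 1)"
proof (cases "0 \<le> n")
  case True
  then have "nat (n + 1) = Suc (nat n)" by simp
  then show ?thesis using True by (simp add: xp_ge0)
next
  case False
  define m where "m = nat (- (n + 1))"
  have a: "nat (- n) = Suc m" using False unfolding m_def by simp
  have b: "xp r z n = z (Suc m)" using False a by (simp add: xp_le0)
  have c: "xp r z (n + 1) = z m" using False unfolding m_def by (simp add: xp_le0)
  show ?thesis using b c sol by simp
qed

lemma xp_iter:
  assumes sol: "\<forall>n. r (z (Suc n)) = z n"
  shows "xp r z (n + int p) = (r ^^ p) (xp r z n)"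
proof (induction p)
  case 0 show ?case by simp
next
  case (Suc p)
  have "xp r z (n + int (Suc p)) = xp r z ((n + int p) + 1)" by (simp add: algebra_simps)
  also have "\<dots> = r (xp r z (n + int p))" by (rule xp_step[OF sol, symmetric])
  also have "\<dots> = (r ^^ Suc p) (xp r z n)" using Suc by simp
  finally show ?case .
qed

lemma xp_inj:
  assumes sol: "\<forall>n. r (z (Suc n)) = z n"
    and aper: "\<forall>p j. 0 < p \<longrightarrow> (r ^^ p) ((r ^^ j) (z 0)) \<noteq> (r ^^ j) (z 0)"
  shows "inj (xp r z)"
proof -
  have neq: "xp r z n \<noteq> xp r z m" if nm: "n < m" for n m
  proof
    assume eq: "xp r z n = xp r z m"
    define p where "p = nat (m - n)"
    have p0: "0 < p" using nm unfolding p_def by simp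
    have "m = n + int p" using nm unfolding p_def by simp
    then have xm: "xp r z m = (r ^^ p) (xp r z n)" using xp_iter[OF sol] by simp
    show False
    proof (cases "0 \<le> n")
      case True
      have "xp r z n = (r ^^ nat n) (z 0)" using True by (rule xp_ge0)
      then show False using aper p0 eq xm by metis
    next
      case False
      define q where "q = nat (- n)"
      have "0 = n + int q" using False unfolding q_def by simp
      then have x0: "xp r z 0 = (r ^^ q) (xp r z n)" using xp_iter[OF sol, of n q] by simp
      have "(r ^^ p) (xp r z 0) = (r ^^ (p + q)) (xp r z n)" using x0 by (simp add: funpow_add)
      also have "\<dots> = (r ^^ (q + p)) (xp r z n)" by (simp only: add.commute)
      also have "\<dots> = (r ^^ q) ((r ^^ p) (xp r z n))" by (simp add: funpow_add)
      also have "\<dots> = (r ^^ q) (xp r z n)" using xm eq by simp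
      also have "\<dots> = xp r z 0" using x0 by simp
      finally have "(r ^^ p) (xp r z 0) = xp r z 0" .
      moreover have "xp r z 0 = (r ^^ 0) (z 0)" by (simp add: xp_ge0)
      ultimately show False using aper p0 by metis
    qed
  qed
  show ?thesis
  proof (rule injI)
    fix n m assume "xp r z n = xp r z m"
    then show "n = m" using neq[of n m] neq[of m n] by (cases n m rule: linorder_cases) auto
  qed
qed

lemma mt_xp_pos: "0 < n \<Longrightarrow> mt r m0 n z = (\<Prod>k\<in>{0..<n}. m0 (xp r z k))"
  by (simp add: mt_def xp_def)

lemma mt_xp_neg: "n < 0 \<Longrightarrow> mt r m0 n z = 1 / (\<Prod>k\<in>{n..<0}. m0 (xp r z k))"
  by (simp add: mt_def xp_def)

lemma mt_step:
  assumes nz: "\<forall>k. m0 (xp r z k) \<noteq> 0"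
  shows "mt r m0 (n + 1) z = mt r m0 n z * m0 (xp r z n)"
proof (cases "0 \<le> n")
  case True
  have s: "{0..<n + 1} = insert n {0..<n}" using True by auto
  have m1: "mt r m0 (n + 1) z = (\<Prod>k\<in>{0..<n+1}. m0 (xp r z k))" using True by (intro mt_xp_pos) simp
  have m2: "mt r m0 n z = (\<Prod>k\<in>{0..<n}. m0 (xp r z k))"
  proof (cases "n = 0")
    case True then show ?thesis by (simp add: mt_def)
  next
    case False then show ?thesis using \<open>0 \<le> n\<close> by (intro mt_xp_pos) simp
  qed
  show ?thesis unfolding m1 m2 s by (simp add: mult.commute)
next
  case False
  have s: "{n..<0} = insert n {n+1..<0}" using False by auto
  define P where "P = (\<Prod>k\<in>{n+1..<0}. m0 (xp r z k))"
  have pr: "(\<Prod>k\<in>{n..<0}. m0 (xp r z k)) = m0 (xp r z n) * P"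
    unfolding s P_def by (subst prod.insert) auto
  have m1: "mt r m0 n z = 1 / (m0 (xp r z n) * P)"
    using False pr by (simp add: mt_xp_neg)
  have m2: "mt r m0 (n + 1) z = 1 / P"
  proof (cases "n + 1 = 0")
    case True then show ?thesis unfolding P_def by (simp add: mt_def)
  next
    case False then show ?thesis unfolding P_def using \<open>\<not> 0 \<le> n\<close> by (intro mt_xp_neg) simp
  qed
  show ?thesis unfolding m1 m2 using nz by simp
qed

lemma mt_nz:
  assumes nz: "\<forall>k. m0 (xp r z k) \<noteq> 0"
  shows "mt r m0 n z \<noteq> 0"
proof -
  consider "n = 0" | "0 < n" | "n < 0" by linarith
  then show ?thesis
  proof cases
    case 1 then show ?thesis by (simp add: mt_def)
  next
    case 2 then show ?thesis using nz by (simp add: mt_xp_pos prod_zero_iff)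
  next
    case 3 then show ?thesis using nz by (simp add: mt_xp_neg prod_zero_iff)
  qed
qed

lemma Uz_xp: "Uz r m0 z \<xi> = (\<lambda>n. m0 (xp r z n) * \<xi> (n + 1))"
  by (simp add: Uz_def xp_def)

lemma piz_xp: "piz r z f \<xi> = (\<lambda>n. f (xp r z n) * \<xi> n)"
  by (simp add: piz_def xp_def)

lemma bij_shift: "bij_betw (\<lambda>n::int. n + c) UNIV UNIV"
  by (rule bij_betwI[where g="\<lambda>n. n - c"]) auto

lemma shift_summable: "(\<lambda>n::int. f (n + c)) summable_on UNIV \<longleftrightarrow> f summable_on UNIV"
  using summable_on_reindex_bij_betw[OF bij_shift[of c], of f] by simp

lemma shift_infsum: "infsum (\<lambda>n::int. f (n + c)) UNIV = infsum f UNIV"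
  using infsum_reindex_bij_betw[OF bij_shift[of c], of f] by simp

lemma w_step:
  assumes nz: "\<forall>k. m0 (xp r z k) \<noteq> 0"
  shows "(cmod (mt r m0 (n + 1) z))\<^sup>2 = (cmod (mt r m0 n z))\<^sup>2 * (cmod (m0 (xp r z n)))\<^sup>2"
  using mt_step[OF nz, of n] by (simp add: norm_mult power_mult_distrib)

lemma U_summand:
  assumes nz: "\<forall>k. m0 (xp r z k) \<noteq> 0"
  shows "(cmod (Uz r m0 z \<xi> n))\<^sup>2 * (cmod (mt r m0 n z))\<^sup>2 =
         (cmod (\<xi> (n + 1)))\<^sup>2 * (cmod (mt r m0 (n + 1) z))\<^sup>2"
  unfolding Uz_xp w_step[OF nz] by (simp add: norm_mult power_mult_distrib)

lemma U_in:
  assumes nz: "\<forall>k. m0 (xp r z k) \<noteq> 0" and xi: "\<xi> \<in> Hz r m0 z"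
  shows "Uz r m0 z \<xi> \<in> Hz r m0 z"
proof -
  have "(\<lambda>n. (cmod (\<xi> n))\<^sup>2 * (cmod (mt r m0 n z))\<^sup>2) summable_on UNIV" using xi by (simp add: Hz_def)
  then have "(\<lambda>n. (cmod (\<xi> (n + 1)))\<^sup>2 * (cmod (mt r m0 (n + 1) z))\<^sup>2) summable_on UNIV"
    using shift_summable[of "\<lambda>n. (cmod (\<xi> n))\<^sup>2 * (cmod (mt r m0 n z))\<^sup>2" 1] by simp
  then show ?thesis unfolding Hz_def using U_summand[OF nz] by simp
qed

lemma U_norm:
  assumes nz: "\<forall>k. m0 (xp r z k) \<noteq> 0"
  shows "Hnorm r m0 z (Uz r m0 z \<xi>) = Hnorm r m0 z \<xi>"
proof -
  have "(\<Sum>\<^sub>\<infinity>n. (cmod (Uz r m0 z \<xi> n))\<^sup>2 * (cmod (mt r m0 n z))\<^sup>2) =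
        (\<Sum>\<^sub>\<infinity>n. (cmod (\<xi> (n + 1)))\<^sup>2 * (cmod (mt r m0 (n + 1) z))\<^sup>2)"
    using U_summand[OF nz] by simp
  also have "\<dots> = (\<Sum>\<^sub>\<infinity>n. (cmod (\<xi> n))\<^sup>2 * (cmod (mt r m0 n z))\<^sup>2)"
    by (rule shift_infsum[of "\<lambda>n. (cmod (\<xi> n))\<^sup>2 * (cmod (mt r m0 n z))\<^sup>2"])
  finally show ?thesis unfolding Hnorm_def by simp
qed

lemma Hip_U:
  assumes nz: "\<forall>k. m0 (xp r z k) \<noteq> 0"
  shows "Hip r m0 z (Uz r m0 z \<xi>) (Uz r m0 z \<eta>) = Hip r m0 z \<xi> \<eta>"
proof -
  have pt: "Uz r m0 z \<xi> n * cnj (Uz r m0 z \<eta> n) * complex_of_real ((cmod (mt r m0 n z))\<^sup>2) =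
     \<xi> (n + 1) * cnj (\<eta> (n + 1)) * complex_of_real ((cmod (mt r m0 (n + 1) z))\<^sup>2)" for n
  proof -
    define g where "g = m0 (xp r z n)"
    have "complex_of_real ((cmod (mt r m0 (n + 1) z))\<^sup>2) =
          complex_of_real ((cmod (mt r m0 n z))\<^sup>2) * complex_of_real ((cmod g)\<^sup>2)"
      unfolding w_step[OF nz] g_def by simp
    also have "\<dots> = complex_of_real ((cmod (mt r m0 n z))\<^sup>2) * (g * cnj g)"
      by (simp only: complex_norm_square)
    finally have e: "complex_of_real ((cmod (mt r m0 (n + 1) z))\<^sup>2) =
          complex_of_real ((cmod (mt r m0 n z))\<^sup>2) * (g * cnj g)" .
    show ?thesis unfolding e Uz_xp g_def[symmetric] by (simp add: mult_ac)
  qed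
  have "Hip r m0 z (Uz r m0 z \<xi>) (Uz r m0 z \<eta>) =
     (\<Sum>\<^sub>\<infinity>n. \<xi> (n + 1) * cnj (\<eta> (n + 1)) * complex_of_real ((cmod (mt r m0 (n + 1) z))\<^sup>2))"
    unfolding Hip_def using pt by simp
  also have "\<dots> = Hip r m0 z \<xi> \<eta>" unfolding Hip_def
    by (rule shift_infsum[of "\<lambda>n. \<xi> n * cnj (\<eta> n) * complex_of_real ((cmod (mt r m0 n z))\<^sup>2)"])
  finally show ?thesis .
qed

lemma U_inj:
  assumes nz: "\<forall>k. m0 (xp r z k) \<noteq> 0"
  shows "inj_on (Uz r m0 z) A"
proof (rule inj_onI)
  fix \<xi> \<eta> assume "\<xi> \<in> A" "\<eta> \<in> A" and e: "Uz r m0 z \<xi> = Uz r m0 z \<eta>"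
  show "\<xi> = \<eta>"
  proof
    fix m :: int
    have "Uz r m0 z \<xi> (m - 1) = Uz r m0 z \<eta> (m - 1)" using e by simp
    then have "m0 (xp r z (m - 1)) * \<xi> m = m0 (xp r z (m - 1)) * \<eta> m" unfolding Uz_xp by simp
    then show "\<xi> m = \<eta> m" using nz by simp
  qed
qed

lemma U_surj:
  assumes nz: "\<forall>k. m0 (xp r z k) \<noteq> 0" and eta: "\<eta> \<in> Hz r m0 z"
  shows "\<eta> \<in> Uz r m0 z ` Hz r m0 z"
proof -
  define V where "V = (\<lambda>n. \<eta> (n - 1) / m0 (xp r z (n - 1)))"
  have UV: "Uz r m0 z V = \<eta>" unfolding Uz_xp V_def using nz by simp
  have sm: "(cmod (V n))\<^sup>2 * (cmod (mt r m0 n z))\<^sup>2 =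
        (cmod (\<eta> (n - 1)))\<^sup>2 * (cmod (mt r m0 (n - 1) z))\<^sup>2" for n
  proof -
    have "(cmod (mt r m0 n z))\<^sup>2 = (cmod (mt r m0 (n - 1) z))\<^sup>2 * (cmod (m0 (xp r z (n - 1))))\<^sup>2"
      using w_step[OF nz, of "n - 1"] by simp
    moreover have "cmod (m0 (xp r z (n - 1))) \<noteq> 0" using nz by simp
    ultimately show ?thesis unfolding V_def by (simp add: norm_divide power_divide)
  qed
  have "(\<lambda>n. (cmod (\<eta> n))\<^sup>2 * (cmod (mt r m0 n z))\<^sup>2) summable_on UNIV" using eta by (simp add: Hz_def)
  then have "(\<lambda>n. (cmod (\<eta> (n + (-1))))\<^sup>2 * (cmod (mt r m0 (n + (-1)) z))\<^sup>2) summable_on UNIV"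
    using shift_summable[of "\<lambda>n. (cmod (\<eta> n))\<^sup>2 * (cmod (mt r m0 n z))\<^sup>2" "-1"] by simp
  then have "V \<in> Hz r m0 z" unfolding Hz_def using sm by simp
  then show ?thesis by (rule rev_image_eqI) (rule UV[symmetric])
qed

lemma unitary:
  assumes nz: "\<forall>k. m0 (xp r z k) \<noteq> 0"
  shows "unitary_on_Hz r m0 z"
  unfolding unitary_on_Hz_def
proof (intro conjI)
  show "bounded_op_on (Hz r m0 z) (Hnorm r m0 z) (Uz r m0 z)"
    unfolding bounded_op_on_def
  proof (intro conjI ballI allI)
    fix \<xi> assume "\<xi> \<in> Hz r m0 z" then show "Uz r m0 z \<xi> \<in> Hz r m0 z" by (rule U_in[OF nz])
  next
    fix \<xi> \<eta> c show "Uz r m0 z (\<lambda>n. c * \<xi> n + \<eta> n) = (\<lambda>n. c * Uz r m0 z \<xi> n + Uz r m0 z \<eta> n)"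
      unfolding Uz_xp by (simp add: algebra_simps)
  next
    show "\<exists>C. \<forall>\<xi>\<in>Hz r m0 z. Hnorm r m0 z (Uz r m0 z \<xi>) \<le> C * Hnorm r m0 z \<xi>"
      by (rule exI[of _ 1]) (simp add: U_norm[OF nz])
  qed
  show "bij_betw (Uz r m0 z) (Hz r m0 z) (Hz r m0 z)"
    unfolding bij_betw_def
  proof
    show "inj_on (Uz r m0 z) (Hz r m0 z)" by (rule U_inj[OF nz])
    show "Uz r m0 z ` Hz r m0 z = Hz r m0 z"
    proof
      show "Uz r m0 z ` Hz r m0 z \<subseteq> Hz r m0 z" using U_in[OF nz] by blast
      show "Hz r m0 z \<subseteq> Uz r m0 z ` Hz r m0 z" using U_surj[OF nz] by blast
    qed
  qed
  show "\<forall>\<xi>\<in>Hz r m0 z. \<forall>\<eta>\<in>Hz r m0 z. Hip r m0 z (Uz r m0 z \<xi>) (Uz r m0 z \<eta>) = Hip r m0 z \<xi> \<eta>"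
    using Hip_U[OF nz] by blast
qed

lemma bb_bound:
  assumes "bounded_borel (f :: 'a::topological_space \<Rightarrow> complex)"
  obtains B where "0 \<le> B" "\<And>x. cmod (f x) \<le> B"
proof -
  have "bounded (range f)" using assms unfolding bounded_borel_def by simp
  then obtain a where a: "\<forall>y\<in>range f. norm y \<le> a" unfolding bounded_iff by blast
  have b: "cmod (f x) \<le> a" for x using a by simp
  have "0 \<le> a" using b[of undefined] norm_ge_zero[of "f undefined"] by linarith
  then show ?thesis using b that by blast
qed

lemma pi_bounded:
  assumes "bounded_borel (f :: 'a::topological_space \<Rightarrow> complex)"
  shows "bounded_op_on (Hz r m0 z) (Hnorm r m0 z) (piz r z f)"
proof -
  obtain B where B0: "0 \<le> B" and B: "\<And>x. cmod (f x) \<le> B" using bb_bound[OF assms] by blast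
  define a where "a \<xi> n = (cmod (\<xi> n))\<^sup>2 * (cmod (mt r m0 n z))\<^sup>2" for \<xi> n
  have le: "a (piz r z f \<xi>) n \<le> B\<^sup>2 * a \<xi> n" for \<xi> n
  proof -
    have "(cmod (f (xp r z n)))\<^sup>2 \<le> B\<^sup>2" using B[of "xp r z n"] by (intro power_mono) simp_all
    then have "(cmod (f (xp r z n)))\<^sup>2 * ((cmod (\<xi> n))\<^sup>2 * (cmod (mt r m0 n z))\<^sup>2)
       \<le> B\<^sup>2 * ((cmod (\<xi> n))\<^sup>2 * (cmod (mt r m0 n z))\<^sup>2)" by (rule mult_right_mono) simp
    then show ?thesis unfolding a_def piz_xp by (simp add: norm_mult power_mult_distrib mult_ac)
  qed
  have nn: "0 \<le> a \<xi> n" for \<xi> n unfolding a_def by simp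
  have sum: "(\<lambda>n. a (piz r z f \<xi>) n) summable_on UNIV" if "\<xi> \<in> Hz r m0 z" for \<xi>
  proof -
    have "(\<lambda>n. a \<xi> n) summable_on UNIV" using that unfolding Hz_def a_def by simp
    then have "(\<lambda>n. B\<^sup>2 * a \<xi> n) summable_on UNIV" by (rule summable_on_cmult_right)
    then show ?thesis using le nn by (rule summable_on_comparison_test)
  qed
  show ?thesis unfolding bounded_op_on_def
  proof (intro conjI ballI allI)
    fix \<xi> assume "\<xi> \<in> Hz r m0 z"
    then show "piz r z f \<xi> \<in> Hz r m0 z" using sum unfolding Hz_def a_def by simp
  next
    fix \<xi> \<eta> c show "piz r z f (\<lambda>n. c * \<xi> n + \<eta> n) = (\<lambda>n. c * piz r z f \<xi> n + piz r z f \<eta> n)"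
      unfolding piz_xp by (simp add: algebra_simps)
  next
    show "\<exists>C. \<forall>\<xi>\<in>Hz r m0 z. Hnorm r m0 z (piz r z f \<xi>) \<le> C * Hnorm r m0 z \<xi>"
    proof (intro exI[of _ B] ballI)
      fix \<xi> assume xi: "\<xi> \<in> Hz r m0 z"
      have s1: "(\<lambda>n. a \<xi> n) summable_on UNIV" using xi unfolding Hz_def a_def by simp
      have "(\<Sum>\<^sub>\<infinity>n. a (piz r z f \<xi>) n) \<le> (\<Sum>\<^sub>\<infinity>n. B\<^sup>2 * a \<xi> n)"
        by (rule infsum_mono[OF sum[OF xi] summable_on_cmult_right[OF s1]]) (rule le)
      also have "\<dots> = B\<^sup>2 * (\<Sum>\<^sub>\<infinity>n. a \<xi> n)" by (rule infsum_cmult_right') 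
      finally have "sqrt (\<Sum>\<^sub>\<infinity>n. a (piz r z f \<xi>) n) \<le> sqrt (B\<^sup>2 * (\<Sum>\<^sub>\<infinity>n. a \<xi> n))"
        by (rule real_sqrt_le_mono)
      also have "\<dots> = B * sqrt (\<Sum>\<^sub>\<infinity>n. a \<xi> n)" using B0 by (simp add: real_sqrt_mult)
      finally show "Hnorm r m0 z (piz r z f \<xi>) \<le> B * Hnorm r m0 z \<xi>" unfolding Hnorm_def a_def .
    qed
  qed
qed

lemma covariant:
  assumes nz: "\<forall>k. m0 (xp r z k) \<noteq> 0"
    and step: "\<forall>n. r (xp r z n) = xp r z (n + 1)"
  shows "covariant_rep_Hz (r :: 'a::topological_space \<Rightarrow> 'a) m0 z"
  unfolding covariant_rep_Hz_def
proof (intro conjI allI impI ballI)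
  fix f :: "'a \<Rightarrow> complex" assume "bounded_borel f"
  then show "bounded_op_on (Hz r m0 z) (Hnorm r m0 z) (piz r z f)" by (rule pi_bounded)
next
  fix \<xi> show "piz r z (\<lambda>_. 1) \<xi> = \<xi>" by (simp add: piz_xp)
next
  fix f g :: "'a \<Rightarrow> complex" and c \<xi>
  show "piz r z (\<lambda>x. c * f x + g x) \<xi> = (\<lambda>n. c * piz r z f \<xi> n + piz r z g \<xi> n)"
    by (simp add: piz_xp algebra_simps)
  show "piz r z (\<lambda>x. f x * g x) \<xi> = piz r z f (piz r z g \<xi>)"
    by (simp add: piz_xp algebra_simps)
next
  fix f :: "'a \<Rightarrow> complex" and \<xi> \<eta>
  show "Hip r m0 z (piz r z f \<xi>) \<eta> = Hip r m0 z \<xi> (piz r z (\<lambda>x. cnj (f x)) \<eta>)"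
    unfolding Hip_def piz_xp by (simp add: mult_ac)
next
  fix f :: "'a \<Rightarrow> complex" and \<xi> assume xi: "\<xi> \<in> Hz r m0 z"
  have inj: "inj_on (Uz r m0 z) (Hz r m0 z)" by (rule U_inj[OF nz])
  have im: "\<xi> \<in> Uz r m0 z ` Hz r m0 z" by (rule U_surj[OF nz xi])
  define \<eta> where "\<eta> = the_inv_into (Hz r m0 z) (Uz r m0 z) \<xi>"
  have U\<eta>: "Uz r m0 z \<eta> = \<xi>" unfolding \<eta>_def by (rule f_the_inv_into_f[OF inj im])
  show "Uz r m0 z (piz r z f (the_inv_into (Hz r m0 z) (Uz r m0 z) \<xi>)) = piz r z (f \<circ> r) \<xi>"
    unfolding \<eta>_def[symmetric]
  proof
    fix n
    have "Uz r m0 z (piz r z f \<eta>) n = f (xp r z (n + 1)) * (m0 (xp r z n) * \<eta> (n + 1))"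
      by (simp add: Uz_xp piz_xp mult_ac)
    also have "\<dots> = f (r (xp r z n)) * \<xi> n" using step U\<eta> by (auto simp: Uz_xp)
    also have "\<dots> = piz r z (f \<circ> r) \<xi> n" by (simp add: piz_xp)
    finally show "Uz r m0 z (piz r z f \<eta>) n = piz r z (f \<circ> r) \<xi> n" .
  qed
qed

lemma finsupp_in_Hz:
  "(\<lambda>n. if n = k then c else 0) \<in> Hz r m0 z"
proof -
  define f where "f n = (cmod (if n = k then c else 0))\<^sup>2 * (cmod (mt r m0 n z))\<^sup>2" for n
  have "f summable_on {k}" by simp
  moreover have "f summable_on {k} \<longleftrightarrow> f summable_on UNIV"
    by (rule summable_on_cong_neutral) (auto simp: f_def)
  ultimately show ?thesis unfolding Hz_def f_def by simp
qed

lemma irreducible: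
  fixes r :: "'a::metric_space \<Rightarrow> 'a"
  assumes nz: "\<forall>k. m0 (xp r z k) \<noteq> 0"
    and inj: "inj (xp r z)"
  shows "irreducible_Hz r m0 z"
  unfolding irreducible_Hz_def
proof (intro allI impI)
  fix T assume Tb: "bounded_op_on (Hz r m0 z) (Hnorm r m0 z) T"
    and TU: "\<forall>\<xi>\<in>Hz r m0 z. T (Uz r m0 z \<xi>) = Uz r m0 z (T \<xi>)"
    and Tp: "\<forall>f. bounded_borel f \<longrightarrow> (\<forall>\<xi>\<in>Hz r m0 z. T (piz r z f \<xi>) = piz r z f (T \<xi>))"
  have lin: "\<And>\<xi> \<eta> c. \<xi> \<in> Hz r m0 z \<Longrightarrow> \<eta> \<in> Hz r m0 z \<Longrightarrow>
      T (\<lambda>n. c * \<xi> n + \<eta> n) = (\<lambda>n. c * T \<xi> n + T \<eta> n)"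
    using Tb unfolding bounded_op_on_def by blast
  define zero :: "int \<Rightarrow> complex" where "zero = (\<lambda>_. 0)"
  have z0: "zero \<in> Hz r m0 z" unfolding zero_def using finsupp_in_Hz[of 0 0 r m0 z] by simp
  have T0: "T zero = zero"
  proof -
    have "T (\<lambda>n. 1 * zero n + zero n) = (\<lambda>n. 1 * T zero n + T zero n)" by (rule lin[OF z0 z0])
    moreover have "(\<lambda>n. 1 * zero n + zero n) = zero" unfolding zero_def by simp
    ultimately have "T zero = (\<lambda>n. T zero n + T zero n)" by simp
    then have "\<And>n. T zero n = T zero n + T zero n" by (metis)
    then show ?thesis unfolding zero_def by (intro ext) simp
  qed
  have sc: "T (\<lambda>n. c * \<xi> n) = (\<lambda>n. c * T \<xi> n)" if "\<xi> \<in> Hz r m0 z" for \<xi> c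
  proof -
    have "T (\<lambda>n. c * \<xi> n + zero n) = (\<lambda>n. c * T \<xi> n + T zero n)" by (rule lin[OF that z0])
    then show ?thesis using T0 unfolding zero_def by simp
  qed
  define e where "e k = (\<lambda>n::int. if n = k then (1::complex) else 0)" for k
  have eH: "e k \<in> Hz r m0 z" for k unfolding e_def by (rule finsupp_in_Hz)
  define fk where "fk k = (indicator {xp r z k} :: 'a \<Rightarrow> complex)" for k
  have fkb: "bounded_borel (fk k)" for k
  proof -
    have "{xp r z k} \<in> sets borel" by (rule borel_closed) simp
    then have "fk k \<in> borel_measurable borel" unfolding fk_def by (rule borel_measurable_indicator)
    moreover have "bounded (range (fk k))"
      by (rule bounded_subset[of "{0,1}"]) (auto simp: fk_def indicator_def)
    ultimately show ?thesis unfolding bounded_borel_def by simp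
  qed
  have pfk: "piz r z (fk k) \<xi> = (\<lambda>n. if n = k then \<xi> n else 0)" for k \<xi>
  proof
    fix n
    have "(xp r z n = xp r z k) \<longleftrightarrow> n = k" using inj by (auto dest: injD)
    then show "piz r z (fk k) \<xi> n = (if n = k then \<xi> n else 0)"
      unfolding piz_xp fk_def by (simp add: indicator_def)
  qed
  define c where "c k = T (e k) k" for k
  have Te: "T (e k) = (\<lambda>n. c k * e k n)" for k
  proof -
    have "piz r z (fk k) (e k) = e k" unfolding pfk e_def by auto
    then have "T (e k) = piz r z (fk k) (T (e k))" using Tp fkb eH by metis
    also have "\<dots> = (\<lambda>n. c k * e k n)" unfolding pfk c_def e_def by auto
    finally show ?thesis .
  qed
  have cstep: "c (k + 1) = c k" for k
  proof -
    have Ue: "Uz r m0 z (e (k + 1)) = (\<lambda>n. m0 (xp r z k) * e k n)"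
      unfolding Uz_xp e_def by auto
    have "T (Uz r m0 z (e (k + 1))) = Uz r m0 z (T (e (k + 1)))" using TU eH by blast
    then have "T (\<lambda>n. m0 (xp r z k) * e k n) = Uz r m0 z (\<lambda>n. c (k + 1) * e (k + 1) n)"
      unfolding Ue Te[of "k + 1"] by simp
    then have "(\<lambda>n. m0 (xp r z k) * T (e k) n) = Uz r m0 z (\<lambda>n. c (k + 1) * e (k + 1) n)"
      using sc[OF eH[of k]] by simp
    then have "m0 (xp r z k) * T (e k) k = Uz r m0 z (\<lambda>n. c (k + 1) * e (k + 1) n) k" by metis
    then have "m0 (xp r z k) * c k = m0 (xp r z k) * c (k + 1)"
      unfolding c_def[of k] Uz_xp e_def by simp
    then show ?thesis using nz by simp
  qed
  have call: "c k = c 0" for k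
  proof (induction k rule: int_induct[where k=0])
    case base show ?case ..
  next
    case (step1 i) then show ?case using cstep[of i] by simp
  next
    case (step2 i) then show ?case using cstep[of "i - 1"] by simp
  qed
  show "\<exists>a. \<forall>\<xi>\<in>Hz r m0 z. T \<xi> = (\<lambda>n. a * \<xi> n)"
  proof (intro exI[of _ "c 0"] ballI ext)
    fix \<xi> k assume xi: "\<xi> \<in> Hz r m0 z"
    have p: "piz r z (fk k) \<xi> = (\<lambda>n. \<xi> k * e k n)" unfolding pfk e_def by auto
    have "T (piz r z (fk k) \<xi>) = piz r z (fk k) (T \<xi>)" using Tp fkb xi by blast
    then have "T (\<lambda>n. \<xi> k * e k n) = piz r z (fk k) (T \<xi>)" unfolding p .
    then have "(\<lambda>n. \<xi> k * T (e k) n) = piz r z (fk k) (T \<xi>)" using sc[OF eH[of k]] by simp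
    then have "\<xi> k * T (e k) k = piz r z (fk k) (T \<xi>) k" by metis
    then have "\<xi> k * c k = T \<xi> k" unfolding c_def pfk by simp
    then show "T \<xi> k = c 0 * \<xi> k" using call[of k] by (simp add: mult.commute)
  qed
qed

theorem lemma3p4:
  fixes r :: "'a::metric_space \<Rightarrow> 'a"
    and \<mu> :: "'a measure"
    and m0 :: "'a \<Rightarrow> complex"
    and M :: "(nat \<Rightarrow> 'a) measure"
  assumes "compact (UNIV :: 'a set)"
    and "\<forall>x. finite (r -` {x})"
    and "surj r"
    and "r \<in> borel_measurable borel"
    and "prob_space \<mu>" and "sets \<mu> = sets borel"
    and "strongly_invariant \<mu> r"
    and "ergodic_map \<mu> r"
    and "QMF r m0"
    and "\<not> (AE x in \<mu>. cmod (m0 x) = 1)"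
    and "emeasure \<mu> {x. m0 x = 0} = 0"
    and "integrable \<mu> (\<lambda>x. ln ((cmod (m0 x))\<^sup>2))"
    and "is_mu_inf \<mu> r m0 M"
  shows "AE z in M. z \<in> solenoid r \<and> (\<forall>n. mt r m0 n z \<noteq> 0) \<and>
           unitary_on_Hz r m0 z \<and> covariant_rep_Hz r m0 z \<and> irreducible_Hz r m0 z"
proof -
  have AE: "AE z in M. (\<forall>n. r (z (Suc n)) = z n) \<and> (\<forall>j. m0 (z (Suc j)) \<noteq> 0) \<and>
     (\<forall>j. m0 ((r ^^ j) (z 0)) \<noteq> 0) \<and> (\<forall>p j. 0 < p \<longrightarrow> (r ^^ p) ((r ^^ j) (z 0)) \<noteq> (r ^^ j) (z 0))"
    by (rule AE_good[OF assms(1-11) assms(13)])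
  show ?thesis
  proof (rule eventually_mono[OF AE])
    fix z :: "nat \<Rightarrow> 'a"
    assume h: "(\<forall>n. r (z (Suc n)) = z n) \<and> (\<forall>j. m0 (z (Suc j)) \<noteq> 0) \<and>
     (\<forall>j. m0 ((r ^^ j) (z 0)) \<noteq> 0) \<and> (\<forall>p j. 0 < p \<longrightarrow> (r ^^ p) ((r ^^ j) (z 0)) \<noteq> (r ^^ j) (z 0))"
    then have sol: "\<forall>n. r (z (Suc n)) = z n" and nz1: "\<forall>j. m0 (z (Suc j)) \<noteq> 0"
      and nz2: "\<forall>j. m0 ((r ^^ j) (z 0)) \<noteq> 0"
      and aper: "\<forall>p j. 0 < p \<longrightarrow> (r ^^ p) ((r ^^ j) (z 0)) \<noteq> (r ^^ j) (z 0)" by blast+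
    have nz: "\<forall>k. m0 (xp r z k) \<noteq> 0"
    proof
      fix k :: int
      show "m0 (xp r z k) \<noteq> 0"
      proof (cases "0 \<le> k")
        case True then show ?thesis using nz2 by (simp add: xp_ge0)
      next
        case False
        then have "nat (- k) = Suc (nat (- k) - 1)" by simp
        then have "xp r z k = z (Suc (nat (- k) - 1))" using False by (simp add: xp_le0)
        then show ?thesis using nz1 by simp
      qed
    qed
    have step: "\<forall>n. r (xp r z n) = xp r z (n + 1)" using xp_step[OF sol] by blast
    show "z \<in> solenoid r \<and> (\<forall>n. mt r m0 n z \<noteq> 0) \<and>
           unitary_on_Hz r m0 z \<and> covariant_rep_Hz r m0 z \<and> irreducible_Hz r m0 z"
    proof (intro conjI allI)
      show "z \<in> solenoid r" unfolding solenoid_def using sol by simp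
      fix n show "mt r m0 n z \<noteq> 0" by (rule mt_nz[OF nz])
    next
      show "unitary_on_Hz r m0 z" by (rule unitary[OF nz])
      show "covariant_rep_Hz r m0 z" by (rule covariant[OF nz step])
      show "irreducible_Hz r m0 z" by (rule irreducible[OF nz xp_inj[OF sol aper]])
    qed
  qed
qed

end
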